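(* Let $\psi:\mathbb{R}^n\to\mathbb{R}^n$ be a contraction and $\varepsilon\ge0$. If $x,x'\in\mathbb{R}^n$ are such that $L=\|\psi(x)-\psi(x')\|$ satisfies $\|x-x'\|\le L+\varepsilon$, then for all $0\le t\le1$, $$\|\psi((1-t)x+tx')-((1-t)\psi(x)+t\psi(x'))\|\le\sqrt{\varepsilon(2L+\varepsilon)}.$$
   Context: A contraction is a map with Lipschitz constant $1$ with respect to the Euclidean norm. *)

theory Defs
  imports "HOL-Analysis.Analysis"
begin

end

theory Submission
  imports Defs
begin

lemma ident:
  fixes u v :: "'a::real_inner" and t :: real
  shows "(norm ((1 - t) *\<^sub>R u + t *\<^sub>R v))\<^sup>2 + t * (1 - t) * (norm (v - u))\<^sup>2
       = (1 - t) * (norm u)\<^sup>2 + t * (norm v)\<^sup>2"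
  unfolding power2_norm_eq_inner
  by (simp add: inner_add_left inner_add_right inner_diff_left
      inner_diff_right inner_commute algebra_simps)

theorem lemma7p4:
  fixes \<psi> :: "real ^ 'n \<Rightarrow> real ^ 'n" and x x' :: "real ^ 'n"
    and \<epsilon> L t :: real
  assumes "1-lipschitz_on UNIV \<psi>"
    and "\<epsilon> \<ge> 0"
    and "L = norm (\<psi> x - \<psi> x')"
    and "norm (x - x') \<le> L + \<epsilon>"
    and "0 \<le> t" and "t \<le> 1"
  shows "norm (\<psi> ((1 - t) *\<^sub>R x + t *\<^sub>R x') - ((1 - t) *\<^sub>R \<psi> x + t *\<^sub>R \<psi> x'))
           \<le> sqrt (\<epsilon> * (2 * L + \<epsilon>))"
proof -
  define z where "z = (1 - t) *\<^sub>R x + t *\<^sub>R x'"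
  define u where "u = \<psi> z - \<psi> x"
  define v where "v = \<psi> z - \<psi> x'"
  define D where "D = L + \<epsilon>"
  have L0: "L \<ge> 0" using assms(3) by simp
  have lip: "\<And>a b. dist (\<psi> a) (\<psi> b) \<le> dist a b"
    using assms(1) by (metis lipschitz_onD mult_1 UNIV_I)
  have zx: "z - x = t *\<^sub>R (x' - x)" unfolding z_def by (simp add: algebra_simps)
  have zx': "z - x' = (1 - t) *\<^sub>R (x - x')" unfolding z_def by (simp add: algebra_simps)
  have nxx: "norm (x' - x) = norm (x - x')" by (simp add: norm_minus_commute)
  have nu: "norm u \<le> t * D"
  proof -
    have "norm u \<le> norm (z - x)" using lip[of z x] by (simp add: u_def dist_norm)
    also have "\<dots> = t * norm (x - x')" using zx nxx assms(5) by simp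
    also have "\<dots> \<le> t * D" using assms(4,5) D_def by (simp add: mult_left_mono)
    finally show ?thesis .
  qed
  have nv: "norm v \<le> (1 - t) * D"
  proof -
    have "norm v \<le> norm (z - x')" using lip[of z x'] by (simp add: v_def dist_norm)
    also have "\<dots> = (1 - t) * norm (x - x')" using zx' assms(6) by simp
    also have "\<dots> \<le> (1 - t) * D" using assms(4,6) D_def by (simp add: mult_left_mono)
    finally show ?thesis .
  qed
  have e1: "(1 - t) *\<^sub>R u + t *\<^sub>R v = \<psi> z - ((1 - t) *\<^sub>R \<psi> x + t *\<^sub>R \<psi> x')"
    unfolding u_def v_def by (simp add: algebra_simps)
  have e2: "norm (v - u) = L" unfolding u_def v_def assms(3) by (simp add: norm_minus_commute)
  define N where "N = norm (\<psi> z - ((1 - t) *\<^sub>R \<psi> x + t *\<^sub>R \<psi> x'))"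
  have id: "N\<^sup>2 + t * (1 - t) * L\<^sup>2 = (1 - t) * (norm u)\<^sup>2 + t * (norm v)\<^sup>2"
    using ident[of t u v] e1 e2 N_def by simp
  have u2: "(norm u)\<^sup>2 \<le> (t * D)\<^sup>2" using nu by (simp add: power_mono)
  have v2: "(norm v)\<^sup>2 \<le> ((1 - t) * D)\<^sup>2" using nv by (simp add: power_mono)
  have "(1 - t) * (norm u)\<^sup>2 + t * (norm v)\<^sup>2 \<le> (1 - t) * (t * D)\<^sup>2 + t * ((1 - t) * D)\<^sup>2"
    using u2 v2 assms(5,6) by (intro add_mono mult_left_mono) auto
  hence "N\<^sup>2 \<le> t * (1 - t) * (D\<^sup>2 - L\<^sup>2)" using id by (simp add: algebra_simps power2_eq_square)
  also have "\<dots> \<le> D\<^sup>2 - L\<^sup>2"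
  proof -
    have "D\<^sup>2 - L\<^sup>2 \<ge> 0" using D_def L0 assms(2) by (simp add: power_mono)
    moreover have "t * (1 - t) \<le> 1"
    proof -
      have "t * (1 - t) \<le> t * 1" using assms(5,6) by (intro mult_left_mono) auto
      thus ?thesis using assms(6) by simp
    qed
    moreover have "t * (1 - t) \<ge> 0" using assms(5,6) by simp
    ultimately show ?thesis by (metis mult_left_le_one_le)
  qed
  also have "\<dots> = \<epsilon> * (2 * L + \<epsilon>)" unfolding D_def by (simp add: algebra_simps power2_eq_square)
  finally have "N\<^sup>2 \<le> \<epsilon> * (2 * L + \<epsilon>)" .
  hence "N \<le> sqrt (\<epsilon> * (2 * L + \<epsilon>))" using real_le_rsqrt by blast
  thus ?thesis unfolding N_def z_def .
qed

end
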